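(* For every integer $q\ge 6$ there exists an $\mathcal{SOS}_q(2)$ of period $\frac{(q-2)(q-4)}{2}$ if $q\equiv 0\pmod 4$, $\frac{(q-1)(q-5)}{2}$ if $q\equiv 1\pmod 4$, $\frac{(q-2)(q-6)}{2}$ if $q\equiv 2\pmod 4$, and $\frac{(q-1)(q-3)}{2}$ if $q\equiv 3\pmod 4$.
   Context: For a periodic sequence $S=(s_i)$ over $\mathbb{Z}_q$ write $\mathbf{s}_n(i)=(s_i,\ldots,s_{i+n-1})$; $\mathbf{u}^R$ denotes the reverse of a tuple and $-\mathbf{u}$ its termwise negative. An $\mathcal{SOS}_q(n)$ is a periodic sequence of period $m$ over $\mathbb{Z}_q$ such that $\mathbf{s}_n(i)=\mathbf{s}_n(j)$ implies $i\equiv j\pmod m$, and $\mathbf{s}_n(i)\neq\mathbf{s}_n(j)^R$ and $\mathbf{s}_n(i)\neq-\mathbf{s}_n(j)^R$ for all $i,j$. *)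

theory Defs
  imports Main
begin

text \<open>A periodic sequence over Z_q of period m is represented by one period,
  a list xs of length m with entries in {0..<q}; s_i = xs ! (i mod m).
  Since windows depend only on i mod m, quantifying over i, j < m is
  equivalent to quantifying over all i, j.\<close>

definition win :: "int list \<Rightarrow> nat \<Rightarrow> nat \<Rightarrow> int list" where
  "win xs n i = map (\<lambda>k. xs ! ((i + k) mod length xs)) [0..<n]"

definition negq :: "int \<Rightarrow> int list \<Rightarrow> int list" where
  "negq q u = map (\<lambda>x. (- x) mod q) u"

definition is_SOS :: "int \<Rightarrow> nat \<Rightarrow> int list \<Rightarrow> bool" where
  "is_SOS q n xs \<longleftrightarrow>
     set xs \<subseteq> {0..<q} \<and>
     (\<forall>i<length xs. \<forall>j<length xs. win xs n i = win xs n j \<longrightarrow> i = j) \<and>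
     (\<forall>i<length xs. \<forall>j<length xs. win xs n i \<noteq> rev (win xs n j)) \<and>
     (\<forall>i<length xs. \<forall>j<length xs. win xs n i \<noteq> negq q (rev (win xs n j)))"

end

theory Submission
  imports Defs "Graph_Theory.Graph_Theory"
begin

definition Tr :: "nat \<Rightarrow> nat \<Rightarrow> nat \<Rightarrow> nat \<Rightarrow> bool" where
  "Tr n K i j \<longleftrightarrow> 1 \<le> (int j - int i) mod int n \<and> (int j - int i) mod int n \<le> int K"

definition VV :: "nat \<Rightarrow> (nat \<times> bool) set" where
  "VV n = {0..<n} \<times> UNIV"

definition EE :: "nat \<Rightarrow> nat \<Rightarrow> ((nat \<times> bool) \<times> (nat \<times> bool)) set" where
  "EE n K = {(u,v). u \<in> VV n \<and> v \<in> VV n \<and> Tr n K (fst u) (fst v)}"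

definition GG :: "nat \<Rightarrow> nat \<Rightarrow> (nat \<times> bool) pair_pre_digraph" where
  "GG n K = \<lparr>pverts = VV n, parcs = EE n K\<rparr>"

lemma Tr_antisym: assumes "Tr n K i j" "Tr n K j i" "2*K < n" shows False
proof -
  let ?a = "(int j - int i) mod int n" and ?b = "(int i - int j) mod int n"
  have "(?a + ?b) mod int n = 0" by (simp add: mod_add_eq)
  moreover have "0 < ?a + ?b" "?a + ?b < int n" using assms by (auto simp: Tr_def)
  ultimately show False by simp
qed

lemma GG_fin: "pair_fin_digraph (GG n K)"
  by unfold_locales (auto simp: GG_def EE_def VV_def intro: finite_subset[of _ "VV n \<times> VV n"])


definition rho :: "nat \<Rightarrow> nat \<Rightarrow> nat \<Rightarrow> nat" where
  "rho n c i = nat ((2 * int c - int i) mod int n)"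

lemma rho_lt: "0 < n \<Longrightarrow> rho n c i < n"
  by (simp add: rho_def nat_less_iff)

lemma rho_int: "0 < n \<Longrightarrow> int (rho n c i) = (2 * int c - int i) mod int n"
  by (simp add: rho_def)

lemma rho_Tr1: assumes "0 < n" "Tr n K i c" shows "Tr n K c (rho n c i)"
proof -
  have "(int (rho n c i) - int c) mod int n = (int c - int i) mod int n"
    using assms(1) by (simp add: rho_int mod_diff_left_eq)
  then show ?thesis using assms(2) by (simp add: Tr_def)
qed

lemma rho_Tr2: assumes "0 < n" "Tr n K c j" shows "Tr n K (rho n c j) c"
proof -
  have "(int c - int (rho n c j)) mod int n = (int c - (2 * int c - int j)) mod int n"
    using assms(1) by (simp add: rho_int mod_diff_right_eq)
  also have "\<dots> = (int j - int c) mod int n" by (simp add: algebra_simps)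
  finally show ?thesis using assms(2) by (simp add: Tr_def)
qed

lemma rho_inj: assumes "rho n c i = rho n c i'" "i < n" "i' < n" shows "i = i'"
proof -
  have "0 < n" using assms by simp
  then have "(2 * int c - int i) mod int n = (2 * int c - int i') mod int n"
    using assms(1) by (metis rho_int)
  then have "(2 * int c - (2 * int c - int i) mod int n) mod int n = (2 * int c - (2 * int c - int i') mod int n) mod int n"
    by simp
  then have "(int i) mod int n = (int i') mod int n"
    by (simp only: mod_diff_right_eq) simp
  then show ?thesis using assms by simp
qed

lemma in_out_card: assumes "v \<in> VV n"
  shows "card {e \<in> EE n K. snd e = v} = card {e \<in> EE n K. fst e = v}"
proof -
  have n0: "0 < n" using assms by (auto simp: VV_def)
  have fin: "finite (EE n K)" using GG_fin[of n K] by (simp add: GG_def pair_fin_digraph_def pair_fin_digraph_axioms_def)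
  let ?h1 = "\<lambda>e::(nat\<times>bool)\<times>(nat\<times>bool). (v, (rho n (fst v) (fst (fst e)), snd (fst e)))"
  let ?h2 = "\<lambda>e::(nat\<times>bool)\<times>(nat\<times>bool). ((rho n (fst v) (fst (snd e)), snd (snd e)), v)"
  have "card {e \<in> EE n K. snd e = v} \<le> card {e \<in> EE n K. fst e = v}"
  proof (rule card_inj_on_le[where f = ?h1])
    show "inj_on ?h1 {e \<in> EE n K. snd e = v}"
      by (auto simp: inj_on_def EE_def VV_def dest: rho_inj)
    show "?h1 ` {e \<in> EE n K. snd e = v} \<subseteq> {e \<in> EE n K. fst e = v}"
      using assms n0 by (auto simp: EE_def VV_def rho_lt intro: rho_Tr1[OF n0])
    show "finite {e \<in> EE n K. fst e = v}" using fin by simp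
  qed
  moreover have "card {e \<in> EE n K. fst e = v} \<le> card {e \<in> EE n K. snd e = v}"
  proof (rule card_inj_on_le[where f = ?h2])
    show "inj_on ?h2 {e \<in> EE n K. fst e = v}"
      by (auto simp: inj_on_def EE_def VV_def dest: rho_inj)
    show "?h2 ` {e \<in> EE n K. fst e = v} \<subseteq> {e \<in> EE n K. snd e = v}"
      using assms n0 by (auto simp: EE_def VV_def rho_lt intro: rho_Tr2[OF n0])
    show "finite {e \<in> EE n K. snd e = v}" using fin by simp
  qed
  ultimately show ?thesis by simp
qed

lemma step_arc: assumes "i < n" "1 \<le> K" "2 \<le> n"
  shows "((i,e),(nat((int i + 1) mod int n), f)) \<in> EE n K"
proof -
  have "(int (nat((int i + 1) mod int n)) - int i) mod int n = 1"
    using assms by (simp add: mod_diff_left_eq)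
  then show ?thesis using assms by (simp add: EE_def VV_def Tr_def nat_less_iff)
qed

lemma reach_r: assumes "i < n" "1 \<le> K" "2 \<le> n"
  shows "((i,e), (nat((int i + int (Suc r)) mod int n), f)) \<in> (EE n K)^+"
proof (induct r arbitrary: f)
  case 0
  then show ?case using step_arc[OF assms] by auto
next
  case (Suc r)
  let ?i' = "nat((int i + int (Suc r)) mod int n)"
  have a: "((i,e), (?i', True)) \<in> (EE n K)^+" by (rule Suc)
  have "?i' < n" using assms by (simp add: nat_less_iff)
  then have b: "((?i', True), (nat((int ?i' + 1) mod int n), f)) \<in> EE n K"
    using step_arc assms by blast
  have "(int ?i' + 1) mod int n = ((int i + int (Suc r)) mod int n + 1) mod int n"
    using assms by simp
  also have "\<dots> = (int i + int (Suc r) + 1) mod int n" by (rule mod_add_left_eq)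
  also have "\<dots> = (int i + int (Suc (Suc r))) mod int n" by (simp add: ac_simps)
  finally have "(int ?i' + 1) mod int n = (int i + int (Suc (Suc r))) mod int n" .
  then show ?case using a b by (metis trancl_into_trancl)
qed

lemma reach_all: assumes "u \<in> VV n" "v \<in> VV n" "1 \<le> K" "2 \<le> n"
  shows "(u, v) \<in> (EE n K)^+"
proof -
  obtain i e j f where u: "u = (i,e)" and v: "v = (j,f)" and ij: "i < n" "j < n"
    using assms by (auto simp: VV_def)
  let ?r = "nat ((int j - int i - 1) mod int n)"
  have "(int i + int (Suc ?r)) mod int n = ((int i + 1) + (int j - int i - 1) mod int n) mod int n"
    using assms by (simp add: ac_simps)
  also have "\<dots> = ((int i + 1) + (int j - int i - 1)) mod int n"
    by (rule mod_add_right_eq)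
  also have "\<dots> = int j" using ij by simp
  finally have "nat ((int i + int (Suc ?r)) mod int n) = j" by simp
  then show ?thesis using reach_r[OF ij(1) assms(3,4), of e ?r f] u v by simp
qed

lemma card_EE: assumes "K < n" shows "card (EE n K) = 4 * n * K"
proof -
  let ?A = "VV n \<times> (UNIV :: bool set) \<times> {1..K}"
  let ?g = "\<lambda>(u::nat\<times>bool, f::bool, k::nat). (u, (nat((int (fst u) + int k) mod int n), f))"
  have inj: "inj_on ?g ?A"
  proof (rule inj_onI)
    fix x y assume hx: "x \<in> ?A" and hy: "y \<in> ?A" and eq: "?g x = ?g y"
    obtain u f k where x: "x = (u,f,k)" by (cases x) auto
    obtain u' f' k' where y: "y = (u',f',k')" by (cases y) auto
    have n0: "0 < n" using assms by simp
    have h: "u = u'" "f = f'" "nat ((int (fst u) + int k) mod int n) = nat ((int (fst u) + int k') mod int n)"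
      "1 \<le> k" "k \<le> K" "1 \<le> k'" "k' \<le> K"
      using eq hx hy x y by auto
    have "(int (fst u) + int k) mod int n = (int (fst u) + int k') mod int n"
      using h(3) n0 by (simp add: eq_nat_nat_iff)
    then have "((int (fst u) + int k) mod int n - int (fst u)) mod int n = ((int (fst u) + int k') mod int n - int (fst u)) mod int n"
      by simp
    then have "int k mod int n = int k' mod int n" by (simp only: mod_diff_left_eq) simp
    then have "k = k'" using h assms by simp
    then show "x = y" using x y h by simp
  qed
  have img: "?g ` ?A = EE n K"
  proof
    show "?g ` ?A \<subseteq> EE n K"
    proof
      fix z assume "z \<in> ?g ` ?A"
      then obtain i e f k where z: "z = ((i,e), (nat((int i + int k) mod int n), f))"
        and h: "(i,e) \<in> VV n" "1 \<le> k" "k \<le> K" by auto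
      have n0: "0 < n" using assms by simp
      have "(int (nat ((int i + int k) mod int n)) - int i) mod int n = int k"
        using n0 h assms by (simp add: mod_diff_left_eq)
      then show "z \<in> EE n K"
        using h n0 z by (simp add: EE_def VV_def Tr_def nat_less_iff)
    qed
    show "EE n K \<subseteq> ?g ` ?A"
    proof clarify
      fix i e j f assume h: "((i,e),(j,f)) \<in> EE n K"
      let ?k = "nat ((int j - int i) mod int n)"
      have t: "Tr n K i j" "i < n" "j < n" using h by (auto simp: EE_def VV_def)
      have "(int i + int ?k) mod int n = (int i + (int j - int i)) mod int n"
        using t by (simp add: Tr_def mod_add_right_eq)
      then have "nat ((int i + int ?k) mod int n) = j" using t by simp
      moreover have "(i,e) \<in> VV n" "1 \<le> ?k" "?k \<le> K" using t by (auto simp: VV_def Tr_def)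
      ultimately show "((i,e),(j,f)) \<in> ?g ` ?A"
        by (intro image_eqI[where x = "((i,e), f, ?k)"]) auto
    qed
  qed
  have "card (EE n K) = card ?A" using card_image[OF inj] img by simp
  also have "\<dots> = 4 * n * K" by (simp add: VV_def card_cartesian_product)
  finally show ?thesis .
qed


lemma euler_exists: assumes "1 \<le> K" "2*K < n"
  shows "\<exists>u p. pre_digraph.euler_trail (with_proj (GG n K)) u p u"
proof -
  interpret pair_fin_digraph "GG n K" by (rule GG_fin)
  have n2: "2 \<le> n" using assms by simp
  have reach: "u \<rightarrow>\<^sup>*\<^bsub>mk_symmetric (with_proj (GG n K))\<^esub> v"
    if "u \<in> VV n" "v \<in> VV n" for u v
  proof -
    have "(u, v) \<in> (EE n K)^*" using reach_all[OF that assms(1) n2] by auto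
    then have "u \<rightarrow>\<^sup>*\<^bsub>with_proj (GG n K)\<^esub> v"
      using reachable_conv' that by (auto simp: GG_def)
    then show ?thesis by (rule reachable_mk_symmetricI)
  qed
  have ne: "VV n \<noteq> {}" using n2 by (auto simp: VV_def)
  have con: "connected (with_proj (GG n K))"
    unfolding connected_def strongly_connected_def using reach ne by (simp add: GG_def)
  have deg: "in_degree (with_proj (GG n K)) u = out_degree (with_proj (GG n K)) u"
    if "u \<in> verts (with_proj (GG n K))" for u
  proof -
    have "u \<in> VV n" using that by (simp add: GG_def)
    then show ?thesis
      using in_out_card[of u n K]
      by (simp add: in_degree_def out_degree_def in_arcs_def out_arcs_def GG_def)
  qed
  show ?thesis by (rule closed_euler1[OF con]) (rule deg, simp)
qed

lemma pcas_props: "pcas u p v \<Longrightarrow> (\<forall>i. Suc i < length p \<longrightarrow> fst (p ! Suc i) = snd (p ! i)) \<and>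
   (p \<noteq> [] \<longrightarrow> fst (p ! 0) = u \<and> snd (last p) = v)"
proof (induct p arbitrary: u)
  case Nil then show ?case by simp
next
  case (Cons e p)
  then have h: "fst e = u" "pcas (snd e) p v" by auto
  note IH = Cons(1)[OF h(2)]
  show ?case
  proof (intro conjI allI impI)
    fix i assume i: "Suc i < length (e # p)"
    show "fst ((e # p) ! Suc i) = snd ((e # p) ! i)"
    proof (cases i)
      case 0 then show ?thesis using IH i by (cases p) auto
    next
      case (Suc j) then show ?thesis using IH i by auto
    qed
  next
    assume "e # p \<noteq> []"
    show "fst ((e # p) ! 0) = u" using h by simp
    show "snd (last (e # p)) = v" using IH h by (cases p) auto
  qed
qed

lemma pcas_next: assumes "pcas u p u" "i < length p"
  shows "fst (p ! ((i+1) mod length p)) = snd (p ! i)"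
proof (cases "Suc i < length p")
  case True then show ?thesis using pcas_props[OF assms(1)] by simp
next
  case False
  then have i: "i = length p - 1" using assms by simp
  have "p \<noteq> []" using assms by auto
  then have "last p = p ! i" using i by (simp add: last_conv_nth)
  then show ?thesis using pcas_props[OF assms(1)] False assms(2) i \<open>p \<noteq> []\<close> by auto
qed

definition enc :: "int \<Rightarrow> nat \<times> bool \<Rightarrow> int" where
  "enc q a = (if snd a then int (fst a) + 1 else q - int (fst a) - 1)"

definition flp :: "nat \<times> bool \<Rightarrow> nat \<times> bool" where
  "flp a = (fst a, \<not> snd a)"

lemma enc_inj: assumes "2 * int n < q" "a \<in> VV n" "b \<in> VV n" "enc q a = enc q b" shows "a = b"
  using assms by (cases a; cases b) (auto simp: enc_def VV_def split: if_splits)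

lemma enc_range: assumes "2 * int n < q" "a \<in> VV n" shows "enc q a \<in> {0..<q}"
  using assms by (cases a) (auto simp: enc_def VV_def)

lemma enc_neg: assumes "2 * int n < q" "a \<in> VV n" shows "(- enc q a) mod q = enc q (flp a)"
proof -
  obtain i e where a: "a = (i,e)" by (cases a)
  have i: "int i < int n" using assms a by (simp add: VV_def)
  show ?thesis
  proof (cases e)
    case True
    have "(- (int i + 1)) mod q = q - int i - 1"
    proof -
      have "(- (int i + 1)) mod q = (q + (- (int i + 1))) mod q" by (simp add: mod_add_self1)
      also have "\<dots> = (q - int i - 1) mod q" by (simp add: algebra_simps)
      also have "\<dots> = q - int i - 1" using i assms by (intro mod_pos_pos_trivial) auto
      finally show ?thesis .
    qed
    then show ?thesis using a True by (simp add: enc_def flp_def)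
  next
    case False
    have "(- (q - int i - 1)) mod q = int i + 1"
    proof -
      have "(- (q - int i - 1)) mod q = (int i + 1 + (-1) * q) mod q" by (simp add: algebra_simps)
      also have "\<dots> = (int i + 1) mod q" by (rule mod_mult_self1)
      also have "\<dots> = int i + 1" using i assms by (intro mod_pos_pos_trivial) auto
      finally show ?thesis .
    qed
    then show ?thesis using a False by (simp add: enc_def flp_def)
  qed
qed


lemma win2: assumes "i < length xs"
  shows "win xs 2 i = [xs ! i, xs ! ((i+1) mod length xs)]"
  using assms by (simp add: win_def upt_rec)

lemma graph_SOS: assumes "1 \<le> K" "2*K < n" "2 * int n < q"
  shows "\<exists>xs. is_SOS q 2 xs \<and> length xs = 4 * n * K"
proof -
  obtain u p where et: "pre_digraph.euler_trail (with_proj (GG n K)) u p u"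
    using euler_exists[OF assms(1,2)] by blast
  then have dp: "distinct p" and sp: "set p = EE n K" and cp: "pcas u p u"
    by (auto simp: pre_digraph.euler_trail_def pre_digraph.trail_def pre_digraph.awalk_def
        cas_with_proj_eq GG_def)
  have lp: "length p = 4 * n * K"
    using distinct_card[OF dp] sp card_EE[of K n] assms by simp
  define xs where "xs = map (\<lambda>e. enc q (fst e)) p"
  have lx: "length xs = length p" by (simp add: xs_def)
  have inE: "p ! i \<in> EE n K" if "i < length p" for i using that sp nth_mem by blast
  have fV: "fst (p ! i) \<in> VV n" "snd (p ! i) \<in> VV n" if "i < length p" for i
    using inE[OF that] by (auto simp: EE_def)
  have Tp: "Tr n K (fst (fst (p ! i))) (fst (snd (p ! i)))" if "i < length p" for i
    using inE[OF that] by (auto simp: EE_def)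
  have W: "win xs 2 i = [enc q (fst (p ! i)), enc q (snd (p ! i))]" if "i < length xs" for i
  proof -
    have "Suc i mod length p < length p" using that lx by (auto intro: mod_less_divisor)
    then show ?thesis using that win2[OF that] pcas_next[OF cp, of i] lx by (simp add: xs_def)
  qed
  have "is_SOS q 2 xs"
    unfolding is_SOS_def
  proof (intro conjI allI impI)
    show "set xs \<subseteq> {0..<q}"
    proof
      fix x assume "x \<in> set xs"
      then obtain i where i: "i < length p" "x = enc q (fst (p ! i))"
        by (auto simp: xs_def in_set_conv_nth)
      then show "x \<in> {0..<q}" using enc_range[OF assms(3) fV(1)[OF i(1)]] by simp
    qed
  next
    fix i j assume i: "i < length xs" and j: "j < length xs" and eq: "win xs 2 i = win xs 2 j"
    have "fst (p ! i) = fst (p ! j)" "snd (p ! i) = snd (p ! j)"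
      using eq W[OF i] W[OF j] enc_inj[OF assms(3)] fV i j lx by auto
    then have "p ! i = p ! j" by (simp add: prod_eq_iff)
    then show "i = j" using dp i j lx by (simp add: nth_eq_iff_index_eq)
  next
    fix i j assume i: "i < length xs" and j: "j < length xs"
    show "win xs 2 i \<noteq> rev (win xs 2 j)"
    proof
      assume eq: "win xs 2 i = rev (win xs 2 j)"
      have "fst (p ! i) = snd (p ! j)" "snd (p ! i) = fst (p ! j)"
        using eq W[OF i] W[OF j] enc_inj[OF assms(3)] fV i j lx by auto
      then show False using Tp[of i] Tp[of j] i j lx assms(2) Tr_antisym by metis
    qed
  next
    fix i j assume i: "i < length xs" and j: "j < length xs"
    show "win xs 2 i \<noteq> negq q (rev (win xs 2 j))"
    proof
      assume eq: "win xs 2 i = negq q (rev (win xs 2 j))"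
      have "negq q (rev (win xs 2 j)) = [enc q (flp (snd (p ! j))), enc q (flp (fst (p ! j)))]"
        using W[OF j] enc_neg[OF assms(3)] fV j lx by (simp add: negq_def)
      moreover have "flp (snd (p ! j)) \<in> VV n" "flp (fst (p ! j)) \<in> VV n"
        using fV[of j] j lx by (auto simp: flp_def VV_def mem_Times_iff)
      ultimately have "fst (p ! i) = flp (snd (p ! j))" "snd (p ! i) = flp (fst (p ! j))"
        using eq W[OF i] enc_inj[OF assms(3)] fV i j lx by auto
      then have "fst (fst (p ! i)) = fst (snd (p ! j))" "fst (snd (p ! i)) = fst (fst (p ! j))"
        by (auto simp: flp_def)
      then show False using Tp[of i] Tp[of j] i j lx assms(2) Tr_antisym by metis
    qed
  qed
  then show ?thesis using lx lp by (intro exI[of _ xs]) simp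
qed


lemma target_arith:
  fixes q :: int
  assumes "q \<ge> 6"
  defines "n \<equiv> nat ((q - 1) div 2)"
  shows "int (4 * n * ((n - 1) div 2)) =
      (if q mod 4 = 0 then (q - 2) * (q - 4) div 2
       else if q mod 4 = 1 then (q - 1) * (q - 5) div 2
       else if q mod 4 = 2 then (q - 2) * (q - 6) div 2
       else (q - 1) * (q - 3) div 2)"
proof -
  define N where "N = (q - 1) div 2"
  have N0: "N \<ge> 1" using assms(1) by (simp add: N_def)
  have nN: "int n = N" using N0 by (simp add: n_def N_def)
  have KK: "int ((n - 1) div 2) = (N - 1) div 2"
    using nN N0 by (simp add: zdiv_int of_nat_diff)
  have L: "int (4 * n * ((n - 1) div 2)) = 4 * N * ((N - 1) div 2)"
    using nN KK by simp
  define t where "t = q div 4"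
  have qt: "q = 4 * t + q mod 4" by (simp add: t_def)
  consider "q mod 4 = 0" | "q mod 4 = 1" | "q mod 4 = 2" | "q mod 4 = 3" by linarith
  then show ?thesis
  proof cases
    case 1
    then have q: "q = 4 * t" using qt by simp
    have "N = 2 * t - 1" "(N - 1) div 2 = t - 1" using q unfolding N_def by presburger+
    moreover have "(q - 2) * (q - 4) = 2 * (4 * (2 * t - 1) * (t - 1))" using q by (simp add: algebra_simps)
    ultimately show ?thesis using L 1 by simp
  next
    case 2
    then have q: "q = 4 * t + 1" using qt by simp
    have "N = 2 * t" "(N - 1) div 2 = t - 1" using q unfolding N_def by presburger+
    moreover have "(q - 1) * (q - 5) = 2 * (4 * (2 * t) * (t - 1))" using q by (simp add: algebra_simps)
    ultimately show ?thesis using L 2 by simp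
  next
    case 3
    then have q: "q = 4 * t + 2" using qt by simp
    have "N = 2 * t" "(N - 1) div 2 = t - 1" using q unfolding N_def by presburger+
    moreover have "(q - 2) * (q - 6) = 2 * (4 * (2 * t) * (t - 1))" using q by (simp add: algebra_simps)
    ultimately show ?thesis using L 3 by simp
  next
    case 4
    then have q: "q = 4 * t + 3" using qt by simp
    have "N = 2 * t + 1" "(N - 1) div 2 = t" using q unfolding N_def by presburger+
    moreover have "(q - 1) * (q - 3) = 2 * (4 * (2 * t + 1) * t)" using q by (simp add: algebra_simps)
    ultimately show ?thesis using L 4 by simp
  qed
qed

theorem corollary3p20:
  fixes q :: int
  assumes "q \<ge> 6"
  shows "\<exists>xs. is_SOS q 2 xs \<and>
    int (length xs) =
      (if q mod 4 = 0 then (q - 2) * (q - 4) div 2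
       else if q mod 4 = 1 then (q - 1) * (q - 5) div 2
       else if q mod 4 = 2 then (q - 2) * (q - 6) div 2
       else (q - 1) * (q - 3) div 2)"
proof -
  define n where "n = nat ((q - 1) div 2)"
  define K where "K = (n - 1) div 2"
  have T: "int (4 * n * K) =
      (if q mod 4 = 0 then (q - 2) * (q - 4) div 2
       else if q mod 4 = 1 then (q - 1) * (q - 5) div 2
       else if q mod 4 = 2 then (q - 2) * (q - 6) div 2
       else (q - 1) * (q - 3) div 2)"
    using target_arith[OF assms] by (simp add: n_def K_def)
  show ?thesis
  proof (cases "K = 0")
    case True
    have "is_SOS q 2 []" by (simp add: is_SOS_def)
    then show ?thesis using T True by (intro exI[of _ "[]"]) simp
  next
    case False
    have n1: "n \<ge> 1" using assms by (simp add: n_def)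
    have "2 * K < n" using n1 by (simp add: K_def)
    moreover have "2 * int n < q" using assms by (simp add: n_def)
    ultimately obtain xs where "is_SOS q 2 xs" "length xs = 4 * n * K"
      using graph_SOS[of K n q] False by auto
    then show ?thesis using T by (intro exI[of _ xs]) simp
  qed
qed

end
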